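(* Let $\mathcal{A},\mathcal{C}$ be small categories and $\Gamma,P:\mathcal{A}^{op}\times\mathcal{A}\times\mathcal{C}^{op}\times\mathcal{C}\to\mathbf{Set}$ functors. Let $S_1$ be the set of dinatural transformations, dinatural in $(z,x)\in\mathcal{A}\times\mathcal{C}$, from $(z',z,x',x)\mapsto\Gamma(z',z,x',x)$ to $(z',z,x',x)\mapsto P(z',z,x',x)$ (components $h_{z,x}:\Gamma(z,z,x,x)\to P(z,z,x,x)$), and let $S_2$ be the set of dinatural transformations, dinatural in $(a,b,x)\in\mathcal{A}^{op}\times\mathcal{A}\times\mathcal{C}$, from $(a',b',x',a,b,x)\mapsto\hom_{\mathcal{A}}(a,b)\times\Gamma(b',a',x',x)$ to $(a',b',x',a,b,x)\mapsto P(a,b,x',x)$ (components $\alpha_{a,b,x}:\hom_{\mathcal{A}}(a,b)\times\Gamma(b,a,x,x)\to P(a,b,x,x)$). Then there is a bijection $J:S_1\to S_2$, natural in $\Gamma$ and $P$, such that $J(h)_{z,z,x}(\mathrm{id}_z,k)=h_{z,x}(k)$ for all $z\in\mathcal{A}$, $x\in\mathcal{C}$, $k\in\Gamma(z,z,x,x)$; its inverse sends $\alpha\in S_2$ to the family $k\mapsto\alpha_{z,z,x}(\mathrm{id}_z,k)$.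
   Context: For difunctors $F,G:\mathcal{B}^{op}\times\mathcal{B}\to\mathcal{D}$, a dinatural transformation $\alpha:F\Rightarrow G$ is a family $\alpha_x:F(x,x)\to G(x,x)$, $x\in\mathcal{B}$, such that for every $f:a\to b$: $G(f,\mathrm{id}_b)\circ\alpha_b\circ F(\mathrm{id}_b,f)=G(\mathrm{id}_a,f)\circ\alpha_a\circ F(f,\mathrm{id}_a)$. When $\mathcal{B}$ is a product of categories, the arguments of functors $\mathcal{B}^{op}\times\mathcal{B}\to\mathbf{Set}$ are reordered freely, and dinaturality is with respect to objects of the product category. In $(a',b',x',a,b,x)$ the primed arguments are the contravariant ones ($a'\in\mathcal{A}$, $b'\in\mathcal{A}^{op}$, $x'\in\mathcal{C}^{op}$). *)

theory Defs
  imports Main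
begin

record ('o, 'm) cat =
  Ob   :: "'o set"
  Ar   :: "'m set"
  Dom  :: "'m \<Rightarrow> 'o"
  Cod  :: "'m \<Rightarrow> 'o"
  Idm  :: "'o \<Rightarrow> 'm"
  Comp :: "'m \<Rightarrow> 'm \<Rightarrow> 'm"   (* Comp g f = g \<circ> f *)

definition category :: "('o, 'm) cat \<Rightarrow> bool" where
  "category C \<longleftrightarrow>
     (\<forall>f\<in>Ar C. Dom C f \<in> Ob C \<and> Cod C f \<in> Ob C) \<and>
     (\<forall>a\<in>Ob C. Idm C a \<in> Ar C \<and> Dom C (Idm C a) = a \<and> Cod C (Idm C a) = a) \<and>
     (\<forall>f\<in>Ar C. \<forall>g\<in>Ar C. Cod C f = Dom C g \<longrightarrow>
        Comp C g f \<in> Ar C \<and> Dom C (Comp C g f) = Dom C f \<and> Cod C (Comp C g f) = Cod C g) \<and>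
     (\<forall>f\<in>Ar C. Comp C (Idm C (Cod C f)) f = f \<and> Comp C f (Idm C (Dom C f)) = f) \<and>
     (\<forall>f\<in>Ar C. \<forall>g\<in>Ar C. \<forall>h\<in>Ar C. Cod C f = Dom C g \<longrightarrow> Cod C g = Dom C h \<longrightarrow>
        Comp C h (Comp C g f) = Comp C (Comp C h g) f)"

definition hom :: "('o, 'm) cat \<Rightarrow> 'o \<Rightarrow> 'o \<Rightarrow> 'm set" where
  "hom C a b = {f \<in> Ar C. Dom C f = a \<and> Cod C f = b}"

definition op_cat :: "('o, 'm) cat \<Rightarrow> ('o, 'm) cat" where
  "op_cat C = \<lparr> Ob = Ob C, Ar = Ar C, Dom = Cod C, Cod = Dom C, Idm = Idm C,
                Comp = (\<lambda>g f. Comp C f g) \<rparr>"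

definition prod_cat :: "('o1, 'm1) cat \<Rightarrow> ('o2, 'm2) cat \<Rightarrow> ('o1 \<times> 'o2, 'm1 \<times> 'm2) cat" where
  "prod_cat C D = \<lparr> Ob = Ob C \<times> Ob D, Ar = Ar C \<times> Ar D,
       Dom = (\<lambda>(f, g). (Dom C f, Dom D g)), Cod = (\<lambda>(f, g). (Cod C f, Cod D g)),
       Idm = (\<lambda>(a, b). (Idm C a, Idm D b)),
       Comp = (\<lambda>(f', g') (f, g). (Comp C f' f, Comp D g' g)) \<rparr>"

text \<open>A difunctor is given by its object part Fo x' x (a set of values) and its
  arrow part Fm f g : F(cod f, dom g) \<rightarrow> F(dom f, cod g), f contravariant, g covariant.\<close>

definition difunctor :: "('o, 'm) cat \<Rightarrow> ('o \<Rightarrow> 'o \<Rightarrow> 'v set) \<Rightarrow> ('m \<Rightarrow> 'm \<Rightarrow> 'v \<Rightarrow> 'v) \<Rightarrow> bool" where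
  "difunctor B Fo Fm \<longleftrightarrow>
     (\<forall>f\<in>Ar B. \<forall>g\<in>Ar B. \<forall>u\<in>Fo (Cod B f) (Dom B g). Fm f g u \<in> Fo (Dom B f) (Cod B g)) \<and>
     (\<forall>x'\<in>Ob B. \<forall>x\<in>Ob B. \<forall>u\<in>Fo x' x. Fm (Idm B x') (Idm B x) u = u) \<and>
     (\<forall>f\<in>Ar B. \<forall>f'\<in>Ar B. \<forall>g\<in>Ar B. \<forall>g'\<in>Ar B.
        Cod B f = Dom B f' \<longrightarrow> Cod B g = Dom B g' \<longrightarrow>
        (\<forall>u\<in>Fo (Cod B f') (Dom B g).
           Fm (Comp B f' f) (Comp B g' g) u = Fm f g' (Fm f' g u)))"

text \<open>Dinatural transformations F \<Rightarrow> G, as extensional families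
  (components are undefined off the objects / off their domain).\<close>

definition dinat :: "('o, 'm) cat \<Rightarrow> ('o \<Rightarrow> 'o \<Rightarrow> 'v set) \<Rightarrow> ('m \<Rightarrow> 'm \<Rightarrow> 'v \<Rightarrow> 'v)
     \<Rightarrow> ('o \<Rightarrow> 'o \<Rightarrow> 'w set) \<Rightarrow> ('m \<Rightarrow> 'm \<Rightarrow> 'w \<Rightarrow> 'w) \<Rightarrow> ('o \<Rightarrow> 'v \<Rightarrow> 'w) set" where
  "dinat B Fo Fm Go Gm = {\<alpha>.
     (\<forall>x\<in>Ob B. \<forall>u\<in>Fo x x. \<alpha> x u \<in> Go x x) \<and>
     (\<forall>x. x \<notin> Ob B \<longrightarrow> \<alpha> x = (\<lambda>_. undefined)) \<and>
     (\<forall>x\<in>Ob B. \<forall>u. u \<notin> Fo x x \<longrightarrow> \<alpha> x u = undefined) \<and>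
     (\<forall>f\<in>Ar B. \<forall>u\<in>Fo (Cod B f) (Dom B f).
        Gm f (Idm B (Cod B f)) (\<alpha> (Cod B f) (Fm (Idm B (Cod B f)) f u)) =
        Gm (Idm B (Dom B f)) f (\<alpha> (Dom B f) (Fm f (Idm B (Dom B f)) u)))}"

definition nat_trans :: "('o, 'm) cat \<Rightarrow> ('o \<Rightarrow> 'o \<Rightarrow> 'v set) \<Rightarrow> ('m \<Rightarrow> 'm \<Rightarrow> 'v \<Rightarrow> 'v)
     \<Rightarrow> ('o \<Rightarrow> 'o \<Rightarrow> 'w set) \<Rightarrow> ('m \<Rightarrow> 'm \<Rightarrow> 'w \<Rightarrow> 'w) \<Rightarrow> ('o \<Rightarrow> 'o \<Rightarrow> 'v \<Rightarrow> 'w) \<Rightarrow> bool" where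
  "nat_trans B Fo Fm Go Gm \<theta> \<longleftrightarrow>
     (\<forall>x'\<in>Ob B. \<forall>x\<in>Ob B. \<forall>u\<in>Fo x' x. \<theta> x' x u \<in> Go x' x) \<and>
     (\<forall>f\<in>Ar B. \<forall>g\<in>Ar B. \<forall>u\<in>Fo (Cod B f) (Dom B g).
        Gm f g (\<theta> (Cod B f) (Dom B g) u) = \<theta> (Dom B f) (Cod B g) (Fm f g u))"

definition whisker :: "('o, 'm) cat \<Rightarrow> ('o \<Rightarrow> 'o \<Rightarrow> 'v' set) \<Rightarrow> ('o \<Rightarrow> 'o \<Rightarrow> 'v' \<Rightarrow> 'v)
     \<Rightarrow> ('o \<Rightarrow> 'o \<Rightarrow> 'w \<Rightarrow> 'w') \<Rightarrow> ('o \<Rightarrow> 'v \<Rightarrow> 'w) \<Rightarrow> ('o \<Rightarrow> 'v' \<Rightarrow> 'w')" where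
  "whisker B F'o \<theta> \<psi> \<alpha> = (\<lambda>x. if x \<in> Ob B
      then (\<lambda>u. if u \<in> F'o x x then \<psi> x x (\<alpha> x (\<theta> x x u)) else undefined)
      else (\<lambda>_. undefined))"

text \<open>B1 = A \<times> C; a functor A^op \<times> A \<times> C^op \<times> C \<rightarrow> Set is a difunctor on B1:
  Go (z',x') (z,x) = \<Gamma>(z',z,x',x).\<close>

abbreviation B1 :: "('a, 'ma) cat \<Rightarrow> ('c, 'mc) cat \<Rightarrow> ('a \<times> 'c, 'ma \<times> 'mc) cat" where
  "B1 A C \<equiv> prod_cat A C"

abbreviation B2 :: "('a, 'ma) cat \<Rightarrow> ('c, 'mc) cat \<Rightarrow> ('a \<times> ('a \<times> 'c), 'ma \<times> ('ma \<times> 'mc)) cat" where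
  "B2 A C \<equiv> prod_cat (op_cat A) (prod_cat A C)"

text \<open>Source of S2: (a',b',x',a,b,x) \<mapsto> hom_A(a,b) \<times> \<Gamma>(b',a',x',x).\<close>

definition src2o :: "('a, 'ma) cat \<Rightarrow> ('a \<times> 'c \<Rightarrow> 'a \<times> 'c \<Rightarrow> 'v set)
     \<Rightarrow> 'a \<times> ('a \<times> 'c) \<Rightarrow> 'a \<times> ('a \<times> 'c) \<Rightarrow> ('ma \<times> 'v) set" where
  "src2o A Go = (\<lambda>(a', b', x') (a, b, x). hom A a b \<times> Go (b', x') (a', x))"

definition src2m :: "('a, 'ma) cat \<Rightarrow> ('ma \<times> 'mc \<Rightarrow> 'ma \<times> 'mc \<Rightarrow> 'v \<Rightarrow> 'v)
     \<Rightarrow> 'ma \<times> ('ma \<times> 'mc) \<Rightarrow> 'ma \<times> ('ma \<times> 'mc) \<Rightarrow> 'ma \<times> 'v \<Rightarrow> 'ma \<times> 'v" where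
  "src2m A Gm = (\<lambda>(f1, f2, f3) (g1, g2, g3) (m, k).
      (Comp A g2 (Comp A m g1), Gm (f2, f3) (f1, g3) k))"

text \<open>Target of S2: (a',b',x',a,b,x) \<mapsto> P(a,b,x',x).\<close>

definition tgt2o :: "('a \<times> 'c \<Rightarrow> 'a \<times> 'c \<Rightarrow> 'w set) \<Rightarrow> 'a \<times> ('a \<times> 'c) \<Rightarrow> 'a \<times> ('a \<times> 'c) \<Rightarrow> 'w set" where
  "tgt2o Po = (\<lambda>(a', b', x') (a, b, x). Po (a, x') (b, x))"

definition tgt2m :: "('ma \<times> 'mc \<Rightarrow> 'ma \<times> 'mc \<Rightarrow> 'w \<Rightarrow> 'w)
     \<Rightarrow> 'ma \<times> ('ma \<times> 'mc) \<Rightarrow> 'ma \<times> ('ma \<times> 'mc) \<Rightarrow> 'w \<Rightarrow> 'w" where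
  "tgt2m Pm = (\<lambda>(f1, f2, f3) (g1, g2, g3). Pm (g1, f3) (g2, g3))"

definition src2nt :: "('a \<times> 'c \<Rightarrow> 'a \<times> 'c \<Rightarrow> 'v' \<Rightarrow> 'v)
     \<Rightarrow> 'a \<times> ('a \<times> 'c) \<Rightarrow> 'a \<times> ('a \<times> 'c) \<Rightarrow> 'ma \<times> 'v' \<Rightarrow> 'ma \<times> 'v" where
  "src2nt \<theta> = (\<lambda>(a', b', x') (a, b, x) (m, k). (m, \<theta> (b', x') (a', x) k))"

definition tgt2nt :: "('a \<times> 'c \<Rightarrow> 'a \<times> 'c \<Rightarrow> 'w \<Rightarrow> 'w')
     \<Rightarrow> 'a \<times> ('a \<times> 'c) \<Rightarrow> 'a \<times> ('a \<times> 'c) \<Rightarrow> 'w \<Rightarrow> 'w'" where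
  "tgt2nt \<psi> = (\<lambda>(a', b', x') (a, b, x). \<psi> (a, x') (b, x))"

end

theory Submission
  imports Defs
begin


lemma prod_cat_simps[simp]:
  "Ob (prod_cat C D) = Ob C \<times> Ob D"
  "Ar (prod_cat C D) = Ar C \<times> Ar D"
  "Dom (prod_cat C D) (f, g) = (Dom C f, Dom D g)"
  "Cod (prod_cat C D) (f, g) = (Cod C f, Cod D g)"
  "Idm (prod_cat C D) (a, b) = (Idm C a, Idm D b)"
  "Comp (prod_cat C D) (f', g') (f, g) = (Comp C f' f, Comp D g' g)"
  by (simp_all add: prod_cat_def)

lemma op_cat_simps[simp]:
  "Ob (op_cat C) = Ob C" "Ar (op_cat C) = Ar C" "Dom (op_cat C) = Cod C"
  "Cod (op_cat C) = Dom C" "Idm (op_cat C) = Idm C"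
  by (simp_all add: op_cat_def)

lemma hom_iff[simp]: "f \<in> hom C a b \<longleftrightarrow> f \<in> Ar C \<and> Dom C f = a \<and> Cod C f = b"
  by (simp add: hom_def)

context fixes B :: "('o,'m) cat" assumes cB: "category B"
begin
lemma cat_dom[simp]: "f \<in> Ar B \<Longrightarrow> Dom B f \<in> Ob B" using cB by (simp add: category_def)
lemma cat_cod[simp]: "f \<in> Ar B \<Longrightarrow> Cod B f \<in> Ob B" using cB by (simp add: category_def)
lemma cat_idm[simp]: "a \<in> Ob B \<Longrightarrow> Idm B a \<in> Ar B" using cB by (simp add: category_def)
lemma cat_idm_dom[simp]: "a \<in> Ob B \<Longrightarrow> Dom B (Idm B a) = a" using cB by (simp add: category_def)
lemma cat_idm_cod[simp]: "a \<in> Ob B \<Longrightarrow> Cod B (Idm B a) = a" using cB by (simp add: category_def)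
lemma cat_comp[simp]: "f \<in> Ar B \<Longrightarrow> g \<in> Ar B \<Longrightarrow> Cod B f = Dom B g \<Longrightarrow> Comp B g f \<in> Ar B"
  using cB by (simp add: category_def)
lemma cat_comp_dom[simp]: "f \<in> Ar B \<Longrightarrow> g \<in> Ar B \<Longrightarrow> Cod B f = Dom B g \<Longrightarrow> Dom B (Comp B g f) = Dom B f"
  using cB by (simp add: category_def)
lemma cat_comp_cod[simp]: "f \<in> Ar B \<Longrightarrow> g \<in> Ar B \<Longrightarrow> Cod B f = Dom B g \<Longrightarrow> Cod B (Comp B g f) = Cod B g"
  using cB by (simp add: category_def)
lemma cat_idl[simp]: "f \<in> Ar B \<Longrightarrow> Cod B f = b \<Longrightarrow> Comp B (Idm B b) f = f"
  using cB by (auto simp add: category_def)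
lemma cat_idr[simp]: "f \<in> Ar B \<Longrightarrow> Dom B f = b \<Longrightarrow> Comp B f (Idm B b) = f"
  using cB by (auto simp add: category_def)
lemma cat_assoc: "f \<in> Ar B \<Longrightarrow> g \<in> Ar B \<Longrightarrow> h \<in> Ar B \<Longrightarrow> Cod B f = Dom B g \<Longrightarrow> Cod B g = Dom B h \<Longrightarrow>
   Comp B h (Comp B g f) = Comp B (Comp B h g) f"
  using cB by (simp add: category_def)
end

lemma category_prod: "category A \<Longrightarrow> category C \<Longrightarrow> category (prod_cat A C)"
  unfolding category_def[of "prod_cat A C"]
  by (auto simp: cat_assoc)

context fixes B :: "('o,'m) cat" and Fo Fm assumes dF: "difunctor B Fo Fm"
begin
lemma df_typ[simp]: "f \<in> Ar B \<Longrightarrow> g \<in> Ar B \<Longrightarrow> u \<in> Fo (Cod B f) (Dom B g) \<Longrightarrow> Fm f g u \<in> Fo (Dom B f) (Cod B g)"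
  using dF by (simp add: difunctor_def)
lemma df_id[simp]: "x' \<in> Ob B \<Longrightarrow> x \<in> Ob B \<Longrightarrow> u \<in> Fo x' x \<Longrightarrow> Fm (Idm B x') (Idm B x) u = u"
  using dF by (simp add: difunctor_def)
lemma df_comp: "f \<in> Ar B \<Longrightarrow> f' \<in> Ar B \<Longrightarrow> g \<in> Ar B \<Longrightarrow> g' \<in> Ar B \<Longrightarrow>
   Cod B f = Dom B f' \<Longrightarrow> Cod B g = Dom B g' \<Longrightarrow> u \<in> Fo (Cod B f') (Dom B g) \<Longrightarrow>
   Fm f g' (Fm f' g u) = Fm (Comp B f' f) (Comp B g' g) u"
  using dF unfolding difunctor_def by metis
end


lemma dinat_typ: "h \<in> dinat B Go Gm Po Pm \<Longrightarrow> x \<in> Ob B \<Longrightarrow> u \<in> Go x x \<Longrightarrow> h x u \<in> Po x x"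
  by (simp add: dinat_def)

lemma dinat_eq: "h \<in> dinat B Go Gm Po Pm \<Longrightarrow> f \<in> Ar B \<Longrightarrow> u \<in> Go (Cod B f) (Dom B f) \<Longrightarrow>
  Pm f (Idm B (Cod B f)) (h (Cod B f) (Gm (Idm B (Cod B f)) f u)) =
  Pm (Idm B (Dom B f)) f (h (Dom B f) (Gm f (Idm B (Dom B f)) u))"
  by (simp add: dinat_def)

definition NN where "NN B Gm Pm h c \<psi> k = Pm (Idm B c) \<psi> (h c (Gm \<psi> (Idm B c) k))"

context fixes B :: "('o,'m) cat" and Go Gm Po Pm h
  assumes cB: "category B" and dG: "difunctor B Go Gm" and dP: "difunctor B Po Pm"
    and hd: "h \<in> dinat B Go Gm Po Pm"
begin

lemma L: assumes "\<phi> \<in> Ar B" "\<psi> \<in> Ar B" "Cod B \<phi> = Dom B \<psi>" "k \<in> Go (Cod B \<psi>) (Dom B \<phi>)"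
  shows "Pm \<phi> \<psi> (h (Cod B \<phi>) (Gm \<psi> \<phi> k)) = NN B Gm Pm h (Dom B \<phi>) (Comp B \<psi> \<phi>) k"
proof -
  define c where "c = Dom B \<phi>"
  define d where "d = Cod B \<phi>"
  have ob: "c \<in> Ob B" "d \<in> Ob B" using assms cB by (simp_all add: c_def d_def)
  have 1: "Gm \<psi> \<phi> k = Gm (Idm B d) \<phi> (Gm \<psi> (Idm B c) k)"
    using df_comp[OF dG, of "Idm B d" \<psi> "Idm B c" \<phi> k] assms ob cB by (simp add: c_def d_def)
  define u where "u = Gm \<psi> (Idm B c) k"
  have u: "u \<in> Go d c" unfolding u_def using df_typ[OF dG, of \<psi> "Idm B c" k] assms ob cB
    by (simp add: c_def d_def)
  define v where "v = h d (Gm (Idm B d) \<phi> u)"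
  have v: "v \<in> Po d d" unfolding v_def
    using dinat_typ[OF hd] df_typ[OF dG, of "Idm B d" \<phi> u] u ob assms cB by (simp add: d_def c_def)
  have 3: "Pm \<phi> \<psi> v = Pm (Idm B c) \<psi> (Pm \<phi> (Idm B d) v)"
    using df_comp[OF dP, of "Idm B c" \<phi> "Idm B d" \<psi> v] v assms ob cB by (simp add: c_def d_def)
  have 4: "Pm \<phi> (Idm B d) v = Pm (Idm B c) \<phi> (h c (Gm \<phi> (Idm B c) u))"
    unfolding v_def using dinat_eq[OF hd, of \<phi> u] u assms by (simp add: c_def d_def)
  define w where "w = h c (Gm \<phi> (Idm B c) u)"
  have w: "w \<in> Po c c" unfolding w_def
    using dinat_typ[OF hd] df_typ[OF dG, of \<phi> "Idm B c" u] u ob assms cB by (simp add: d_def c_def)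
  have 5: "Pm (Idm B c) \<psi> (Pm (Idm B c) \<phi> w) = Pm (Idm B c) (Comp B \<psi> \<phi>) w"
    using df_comp[OF dP, of "Idm B c" "Idm B c" \<phi> \<psi> w] w assms ob cB by (simp add: c_def d_def)
  have 6: "Gm \<phi> (Idm B c) u = Gm (Comp B \<psi> \<phi>) (Idm B c) k"
    unfolding u_def using df_comp[OF dG, of \<phi> \<psi> "Idm B c" "Idm B c" k] assms ob cB by (simp add: c_def d_def)
  have "Pm \<phi> \<psi> (h (Cod B \<phi>) (Gm \<psi> \<phi> k)) = Pm \<phi> \<psi> v"
    using 1 by (simp add: v_def u_def d_def)
  also have "\<dots> = Pm (Idm B c) \<psi> (Pm (Idm B c) \<phi> w)" using 3 4 by (simp add: w_def)
  also have "\<dots> = Pm (Idm B c) (Comp B \<psi> \<phi>) w" using 5 .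
  also have "\<dots> = NN B Gm Pm h (Dom B \<phi>) (Comp B \<psi> \<phi>) k"
    unfolding NN_def w_def 6 c_def[symmetric] ..
  finally show ?thesis .
qed

lemma NN_typ: assumes "c \<in> Ob B" "\<psi> \<in> Ar B" "Dom B \<psi> = c" "k \<in> Go (Cod B \<psi>) c"
  shows "NN B Gm Pm h c \<psi> k \<in> Po c (Cod B \<psi>)"
proof -
  have "Gm \<psi> (Idm B c) k \<in> Go c c" using df_typ[OF dG, of \<psi> "Idm B c" k] assms cB by simp
  then have "h c (Gm \<psi> (Idm B c) k) \<in> Po c c" using dinat_typ[OF hd] assms by simp
  then show ?thesis unfolding NN_def using df_typ[OF dP, of "Idm B c" \<psi>] assms cB by simp
qed

lemma NN_id: assumes "c \<in> Ob B" "k \<in> Go c c"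
  shows "NN B Gm Pm h c (Idm B c) k = h c k"
proof -
  have "h c k \<in> Po c c" using dinat_typ[OF hd] assms by simp
  then show ?thesis unfolding NN_def using assms cB df_id[OF dG] df_id[OF dP] by simp
qed

lemma M: assumes "\<phi> \<in> Ar B" "\<psi> \<in> Ar B" "\<psi>' \<in> Ar B" "Cod B \<phi> = Dom B \<psi>" "Cod B \<psi> = Dom B \<psi>'"
   "k \<in> Go (Cod B \<psi>') (Dom B \<phi>)"
  shows "Pm \<phi> \<psi>' (NN B Gm Pm h (Cod B \<phi>) \<psi> (Gm \<psi>' \<phi> k)) = NN B Gm Pm h (Dom B \<phi>) (Comp B (Comp B \<psi>' \<psi>) \<phi>) k"
proof -
  define c where "c = Cod B \<phi>"
  have ob: "c \<in> Ob B" using assms cB by (simp add: c_def)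
  have k1: "Gm \<psi>' \<phi> k \<in> Go (Cod B \<psi>) c" using df_typ[OF dG, of \<psi>' \<phi> k] assms by (simp add: c_def)
  have a: "Gm \<psi> (Idm B c) (Gm \<psi>' \<phi> k) = Gm (Comp B \<psi>' \<psi>) \<phi> k"
    using df_comp[OF dG, of \<psi> \<psi>' \<phi> "Idm B c" k] assms ob cB by (simp add: c_def)
  have v: "h c (Gm (Comp B \<psi>' \<psi>) \<phi> k) \<in> Po c c"
    using dinat_typ[OF hd] df_typ[OF dG, of "Comp B \<psi>' \<psi>" \<phi> k] ob assms cB by (simp add: c_def)
  have b: "Pm \<phi> \<psi>' (Pm (Idm B c) \<psi> (h c (Gm (Comp B \<psi>' \<psi>) \<phi> k))) = Pm \<phi> (Comp B \<psi>' \<psi>) (h c (Gm (Comp B \<psi>' \<psi>) \<phi> k))"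
    using df_comp[OF dP, of \<phi> "Idm B c" \<psi> \<psi>' "h c (Gm (Comp B \<psi>' \<psi>) \<phi> k)"] v assms ob cB by (simp add: c_def)
  have "Pm \<phi> (Comp B \<psi>' \<psi>) (h c (Gm (Comp B \<psi>' \<psi>) \<phi> k)) = NN B Gm Pm h (Dom B \<phi>) (Comp B (Comp B \<psi>' \<psi>) \<phi>) k"
    using L[of \<phi> "Comp B \<psi>' \<psi>" k] assms cB by (simp add: c_def)
  moreover have "NN B Gm Pm h (Cod B \<phi>) \<psi> (Gm \<psi>' \<phi> k) = Pm (Idm B c) \<psi> (h c (Gm (Comp B \<psi>' \<psi>) \<phi> k))"
    unfolding NN_def c_def[symmetric] a ..
  ultimately show ?thesis using b by simp
qed
end


definition JJ where
  "JJ A C Go Gm Po Pm h = (\<lambda>(a, b, x). if (a, b, x) \<in> Ob (B2 A C) then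
     (\<lambda>(m, k). if (m, k) \<in> src2o A Go (a, b, x) (a, b, x)
        then NN (B1 A C) Gm Pm h (a, x) (m, Idm C x) k else undefined)
     else (\<lambda>_. undefined))"

context fixes A :: "('a,'ma) cat" and C :: "('c,'mc) cat" and Go Gm Po Pm h
  assumes cA: "category A" and cC: "category C" and dG: "difunctor (B1 A C) Go Gm"
    and dP: "difunctor (B1 A C) Po Pm" and hd: "h \<in> dinat (B1 A C) Go Gm Po Pm"
begin

lemma cB1: "category (B1 A C)" using category_prod[OF cA cC] .

lemma J_dinat_eq: assumes "f1 \<in> Ar A" "f2 \<in> Ar A" "f3 \<in> Ar C" "m \<in> Ar A" "Dom A m = Cod A f1" "Cod A m = Dom A f2"
  "k \<in> Go (Cod A f2, Cod C f3) (Dom A f1, Dom C f3)"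
  shows "Pm (Idm A (Dom A f1), f3) (Idm A (Cod A f2), Idm C (Cod C f3))
     (NN (B1 A C) Gm Pm h (Dom A f1, Cod C f3) (Comp A f2 (Comp A m f1), Idm C (Cod C f3))
        (Gm (Idm A (Cod A f2), Idm C (Cod C f3)) (Idm A (Dom A f1), f3) k))
   = Pm (f1, Idm C (Dom C f3)) (f2, f3) (NN (B1 A C) Gm Pm h (Cod A f1, Dom C f3) (m, Idm C (Dom C f3))
        (Gm (f2, f3) (f1, Idm C (Dom C f3)) k))"
proof -
  have l: "Pm (Idm A (Dom A f1), f3) (Idm A (Cod A f2), Idm C (Cod C f3))
     (NN (B1 A C) Gm Pm h (Dom A f1, Cod C f3) (Comp A f2 (Comp A m f1), Idm C (Cod C f3))
        (Gm (Idm A (Cod A f2), Idm C (Cod C f3)) (Idm A (Dom A f1), f3) k))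
     = NN (B1 A C) Gm Pm h (Dom A f1, Dom C f3) (Comp A f2 (Comp A m f1), f3) k"
    using M[OF cB1 dG dP hd, of "(Idm A (Dom A f1), f3)" "(Comp A f2 (Comp A m f1), Idm C (Cod C f3))"
       "(Idm A (Cod A f2), Idm C (Cod C f3))" k] assms cA cC by simp
  have r: "Pm (f1, Idm C (Dom C f3)) (f2, f3) (NN (B1 A C) Gm Pm h (Cod A f1, Dom C f3) (m, Idm C (Dom C f3))
        (Gm (f2, f3) (f1, Idm C (Dom C f3)) k)) = NN (B1 A C) Gm Pm h (Dom A f1, Dom C f3) (Comp A f2 (Comp A m f1), f3) k"
    using M[OF cB1 dG dP hd, of "(f1, Idm C (Dom C f3))" "(m, Idm C (Dom C f3))" "(f2, f3)" k] assms cA cC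
    by (simp add: cat_assoc[OF cA])
  show ?thesis using l r by simp
qed

lemma NN_typ1: assumes "a \<in> Ob A" "x \<in> Ob C" "m \<in> Ar A" "Dom A m = a" "k \<in> Go (Cod A m, x) (a, x)"
  shows "NN (B1 A C) Gm Pm h (a, x) (m, Idm C x) k \<in> Po (a, x) (Cod A m, x)"
  using NN_typ[OF cB1 dG dP hd, of "(a, x)" "(m, Idm C x)" k] assms cA cC by simp

lemma J_in: "JJ A C Go Gm Po Pm h \<in> dinat (B2 A C) (src2o A Go) (src2m A Gm) (tgt2o Po) (tgt2m Pm)"
  unfolding dinat_def
proof (intro CollectI conjI ballI allI impI)
  fix o1 u assume "o1 \<in> Ob (B2 A C)" "u \<in> src2o A Go o1 o1"
  then show "JJ A C Go Gm Po Pm h o1 u \<in> tgt2o Po o1 o1"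
    apply (cases o1; cases u)
    using NN_typ1 cA cC by (auto simp: JJ_def src2o_def tgt2o_def)
next
  fix o1 assume "o1 \<notin> Ob (B2 A C)"
  then show "JJ A C Go Gm Po Pm h o1 = (\<lambda>_. undefined)"
    by (cases o1) (auto simp: JJ_def)
next
  fix o1 u assume "o1 \<in> Ob (B2 A C)" "u \<notin> src2o A Go o1 o1"
  then show "JJ A C Go Gm Po Pm h o1 u = undefined"
    by (cases o1; cases u) (auto simp: JJ_def)
next
  fix F u assume prems: "F \<in> Ar (B2 A C)" "u \<in> src2o A Go (Cod (B2 A C) F) (Dom (B2 A C) F)"
  then show "tgt2m Pm F (Idm (B2 A C) (Cod (B2 A C) F))
            (JJ A C Go Gm Po Pm h (Cod (B2 A C) F)
              (src2m A Gm (Idm (B2 A C) (Cod (B2 A C) F)) F u)) =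
           tgt2m Pm (Idm (B2 A C) (Dom (B2 A C) F))
            F (JJ A C Go Gm Po Pm h (Dom (B2 A C) F)
                (src2m A Gm F (Idm (B2 A C) (Dom (B2 A C) F)) u))"
  proof (cases F; cases u)
    fix f1 f2 f3 m k assume F: "F = (f1, f2, f3)" and u: "u = (m, k)"
    have a: "f1 \<in> Ar A" "f2 \<in> Ar A" "f3 \<in> Ar C" "m \<in> Ar A" "Dom A m = Cod A f1" "Cod A m = Dom A f2"
      "k \<in> Go (Cod A f2, Cod C f3) (Dom A f1, Dom C f3)" using prems F u by (auto simp: src2o_def)
    have t1: "Gm (Idm A (Cod A f2), Idm C (Cod C f3)) (Idm A (Dom A f1), f3) k \<in> Go (Cod A f2, Cod C f3) (Dom A f1, Cod C f3)"
      using df_typ[OF dG, of "(Idm A (Cod A f2), Idm C (Cod C f3))" "(Idm A (Dom A f1), f3)" k] a cA cC by simp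
    have t2: "Gm (f2, f3) (f1, Idm C (Dom C f3)) k \<in> Go (Dom A f2, Dom C f3) (Cod A f1, Dom C f3)"
      using df_typ[OF dG, of "(f2, f3)" "(f1, Idm C (Dom C f3))" k] a cA cC by simp
    show ?thesis using a t1 t2 cA cC J_dinat_eq[OF a] unfolding F u
      by (auto simp: JJ_def src2o_def tgt2m_def src2m_def)
  qed
qed
end


lemma KJ: assumes cA: "category A" and cC: "category C" and dG: "difunctor (B1 A C) Go Gm"
    and dP: "difunctor (B1 A C) Po Pm" and hd: "h \<in> dinat (B1 A C) Go Gm Po Pm"
  shows "(\<lambda>(z, x). if (z, x) \<in> Ob (B1 A C)
               then (\<lambda>k. if k \<in> Go (z, x) (z, x) then JJ A C Go Gm Po Pm h (z, z, x) (Idm A z, k) else undefined)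
               else (\<lambda>_. undefined)) = h"
proof (intro ext)
  fix zx k
  show "(\<lambda>(z, x). if (z, x) \<in> Ob (B1 A C)
               then (\<lambda>k. if k \<in> Go (z, x) (z, x) then JJ A C Go Gm Po Pm h (z, z, x) (Idm A z, k) else undefined)
               else (\<lambda>_. undefined)) zx k = h zx k"
  proof (cases zx)
    case (Pair z x)
    show ?thesis
    proof (cases "zx \<in> Ob (B1 A C) \<and> k \<in> Go zx zx")
      case True
      then show ?thesis using NN_id[OF category_prod[OF cA cC] dG dP hd, of zx k] cA cC
        by (auto simp: Pair JJ_def src2o_def)
    next
      case False
      then show ?thesis using hd unfolding dinat_def by (auto simp: Pair)
    qed
  qed
qed

definition KK where
  "KK A C Go \<alpha> = (\<lambda>(z, x). if (z, x) \<in> Ob (B1 A C)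
               then (\<lambda>k. if k \<in> Go (z, x) (z, x) then \<alpha> (z, z, x) (Idm A z, k) else undefined)
               else (\<lambda>_. undefined))"

context fixes A :: "('a,'ma) cat" and C :: "('c,'mc) cat" and Go Gm Po Pm \<alpha>
  assumes cA: "category A" and cC: "category C" and dG: "difunctor (B1 A C) Go Gm"
    and dP: "difunctor (B1 A C) Po Pm" and ad: "\<alpha> \<in> dinat (B2 A C) (src2o A Go) (src2m A Gm) (tgt2o Po) (tgt2m Pm)"
begin

lemma a_typ: "a \<in> Ob A \<Longrightarrow> b \<in> Ob A \<Longrightarrow> x \<in> Ob C \<Longrightarrow> m \<in> Ar A \<Longrightarrow> Dom A m = a \<Longrightarrow> Cod A m = b \<Longrightarrow>
  k \<in> Go (b, x) (a, x) \<Longrightarrow> \<alpha> (a, b, x) (m, k) \<in> Po (a, x) (b, x)"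
  using dinat_typ[OF ad, of "(a, b, x)" "(m, k)"] by (simp add: src2o_def tgt2o_def)

lemma a_eq: assumes "f1 \<in> Ar A" "f2 \<in> Ar A" "f3 \<in> Ar C" "m \<in> Ar A" "Dom A m = Cod A f1" "Cod A m = Dom A f2"
  "k \<in> Go (Cod A f2, Cod C f3) (Dom A f1, Dom C f3)"
  shows "Pm (Idm A (Dom A f1), f3) (Idm A (Cod A f2), Idm C (Cod C f3))
     (\<alpha> (Dom A f1, Cod A f2, Cod C f3) (Comp A f2 (Comp A m f1), Gm (Idm A (Cod A f2), Idm C (Cod C f3)) (Idm A (Dom A f1), f3) k))
   = Pm (f1, Idm C (Dom C f3)) (f2, f3) (\<alpha> (Cod A f1, Dom A f2, Dom C f3) (m, Gm (f2, f3) (f1, Idm C (Dom C f3)) k))"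
  using dinat_eq[OF ad, of "(f1, f2, f3)" "(m, k)"] assms cA cC
  by (simp add: src2o_def tgt2m_def src2m_def)


lemma K_eq: assumes fa: "fa \<in> Ar A" and fc: "fc \<in> Ar C" and u: "u \<in> Go (Cod A fa, Cod C fc) (Dom A fa, Dom C fc)"
  shows "Pm (fa, fc) (Idm A (Cod A fa), Idm C (Cod C fc)) (\<alpha> (Cod A fa, Cod A fa, Cod C fc) (Idm A (Cod A fa), Gm (Idm A (Cod A fa), Idm C (Cod C fc)) (fa, fc) u))
    = Pm (Idm A (Dom A fa), Idm C (Dom C fc)) (fa, fc) (\<alpha> (Dom A fa, Dom A fa, Dom C fc) (Idm A (Dom A fa), Gm (fa, fc) (Idm A (Dom A fa), Idm C (Dom C fc)) u))"
proof -
  define a b c d where "a = Dom A fa" "b = Cod A fa" "c = Dom C fc" "d = Cod C fc"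
  have ob: "a \<in> Ob A" "b \<in> Ob A" "c \<in> Ob C" "d \<in> Ob C" using fa fc cA cC by (auto simp: a_b_c_d_def)
  note dd = a_b_c_d_def[symmetric]
  define k1 where "k1 = Gm (Idm A b, Idm C d) (Idm A a, fc) u"
  have k1: "k1 \<in> Go (b, d) (a, d)" unfolding k1_def
    using df_typ[OF dG, of "(Idm A b, Idm C d)" "(Idm A a, fc)" u] ob fa fc u cA cC by (simp add: dd)
  have g: "Gm (Idm A b, Idm C d) (fa, fc) u = Gm (Idm A b, Idm C d) (fa, Idm C d) k1"
    unfolding k1_def using df_comp[OF dG, of "(Idm A b, Idm C d)" "(Idm A b, Idm C d)" "(Idm A a, fc)" "(fa, Idm C d)" u]
      ob fa fc u cA cC by (simp add: dd)
  define v where "v = \<alpha> (b, b, d) (Idm A b, Gm (Idm A b, Idm C d) (fa, Idm C d) k1)"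
  have v: "v \<in> Po (b, d) (b, d)" unfolding v_def
    using a_typ[of b b d "Idm A b"] df_typ[OF dG, of "(Idm A b, Idm C d)" "(fa, Idm C d)" k1] k1 ob fa cA cC
    by (simp add: dd)
  have p: "Pm (fa, fc) (Idm A b, Idm C d) v = Pm (Idm A a, fc) (Idm A b, Idm C d) (Pm (fa, Idm C d) (Idm A b, Idm C d) v)"
    using df_comp[OF dP, of "(Idm A a, fc)" "(fa, Idm C d)" "(Idm A b, Idm C d)" "(Idm A b, Idm C d)" v]
      v ob fa fc cA cC by (simp add: dd)
  have e1: "Pm (fa, Idm C d) (Idm A b, Idm C d) v = \<alpha> (a, b, d) (fa, k1)"
  proof -
    have "\<alpha> (a, b, d) (fa, k1) \<in> Po (a, d) (b, d)" using a_typ k1 ob fa by (simp add: dd)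
    then show ?thesis
      using a_eq[of fa "Idm A b" "Idm C d" "Idm A b" k1] k1 ob fa cA cC df_id[OF dG, of "(b, d)" "(a, d)" k1]
        df_id[OF dP, of "(a, d)" "(b, d)" "\<alpha> (a, b, d) (fa, k1)"]
      by (simp add: dd v_def)
  qed
  have e2: "Pm (Idm A a, fc) (Idm A b, Idm C d) (\<alpha> (a, b, d) (fa, k1)) =
     Pm (Idm A a, Idm C c) (fa, fc) (\<alpha> (a, a, c) (Idm A a, Gm (fa, fc) (Idm A a, Idm C c) u))"
    using a_eq[of "Idm A a" fa fc "Idm A a" u] ob fa fc u cA cC by (simp add: dd k1_def)
  show ?thesis unfolding dd using g p e1 e2 by (simp add: v_def)
qed

lemma K_in: "KK A C Go \<alpha> \<in> dinat (B1 A C) Go Gm Po Pm"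
  unfolding dinat_def
proof (intro CollectI conjI ballI allI impI)
  fix o1 u assume "o1 \<in> Ob (B1 A C)" "u \<in> Go o1 o1"
  then show "KK A C Go \<alpha> o1 u \<in> Po o1 o1"
    using a_typ cA cC by (cases o1) (auto simp: KK_def)
next
  fix o1 assume "o1 \<notin> Ob (B1 A C)"
  then show "KK A C Go \<alpha> o1 = (\<lambda>_. undefined)"
    by (cases o1) (auto simp: KK_def)
next
  fix o1 u assume "o1 \<in> Ob (B1 A C)" "u \<notin> Go o1 o1"
  then show "KK A C Go \<alpha> o1 u = undefined"
    by (cases o1) (auto simp: KK_def)
next
  fix F u assume prems: "F \<in> Ar (B1 A C)" "u \<in> Go (Cod (B1 A C) F) (Dom (B1 A C) F)"
  show "Pm F (Idm (B1 A C) (Cod (B1 A C) F)) (KK A C Go \<alpha> (Cod (B1 A C) F) (Gm (Idm (B1 A C) (Cod (B1 A C) F)) F u)) =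
        Pm (Idm (B1 A C) (Dom (B1 A C) F)) F (KK A C Go \<alpha> (Dom (B1 A C) F) (Gm F (Idm (B1 A C) (Dom (B1 A C) F)) u))"
  proof (cases F)
    case (Pair fa fc)
    have a: "fa \<in> Ar A" "fc \<in> Ar C" "u \<in> Go (Cod A fa, Cod C fc) (Dom A fa, Dom C fc)" using prems Pair by auto
    have t1: "Gm (Idm A (Cod A fa), Idm C (Cod C fc)) (fa, fc) u \<in> Go (Cod A fa, Cod C fc) (Cod A fa, Cod C fc)"
      using df_typ[OF dG, of "(Idm A (Cod A fa), Idm C (Cod C fc))" "(fa, fc)" u] a cA cC by simp
    have t2: "Gm (fa, fc) (Idm A (Dom A fa), Idm C (Dom C fc)) u \<in> Go (Dom A fa, Dom C fc) (Dom A fa, Dom C fc)"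
      using df_typ[OF dG, of "(fa, fc)" "(Idm A (Dom A fa), Idm C (Dom C fc))" u] a cA cC by simp
    show ?thesis using K_eq[OF a] t1 t2 a cA cC by (simp add: Pair KK_def)
  qed
qed

lemma JK: "JJ A C Go Gm Po Pm (KK A C Go \<alpha>) = \<alpha>"
proof (intro ext)
  fix o1 u
  show "JJ A C Go Gm Po Pm (KK A C Go \<alpha>) o1 u = \<alpha> o1 u"
  proof (cases o1; cases u)
    fix a b x m k assume o1: "o1 = (a, b, x)" and u: "u = (m, k)"
    show ?thesis
    proof (cases "o1 \<in> Ob (B2 A C) \<and> u \<in> src2o A Go o1 o1")
      case True
      then have a: "a \<in> Ob A" "b \<in> Ob A" "x \<in> Ob C" "m \<in> Ar A" "Dom A m = a" "Cod A m = b"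
        "k \<in> Go (b, x) (a, x)" by (auto simp: o1 u src2o_def)
      have t: "Gm (m, Idm C x) (Idm A a, Idm C x) k \<in> Go (a, x) (a, x)"
        using df_typ[OF dG, of "(m, Idm C x)" "(Idm A a, Idm C x)" k] a cA cC by simp
      have ty: "\<alpha> (a, b, x) (m, k) \<in> Po (a, x) (b, x)" using a_typ a by simp
      have "Pm (Idm A a, Idm C x) (m, Idm C x) (\<alpha> (a, a, x) (Idm A a, Gm (m, Idm C x) (Idm A a, Idm C x) k))
         = \<alpha> (a, b, x) (m, k)"
        using a_eq[of "Idm A a" m "Idm C x" "Idm A a" k] a cA cC df_id[OF dG, of "(b, x)" "(a, x)" k]
          df_id[OF dP, of "(a, x)" "(b, x)" "\<alpha> (a, b, x) (m, k)"] ty by simp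
      then show ?thesis using True a t cA cC by (simp add: o1 u JJ_def NN_def KK_def)
    next
      case False
      then show ?thesis using ad unfolding dinat_def by (auto simp: o1 u JJ_def)
    qed
  qed
qed
end



lemma nat_eq: "nat_trans B Fo Fm Go Gm \<theta> \<Longrightarrow> f \<in> Ar B \<Longrightarrow> g \<in> Ar B \<Longrightarrow> u \<in> Fo (Cod B f) (Dom B g) \<Longrightarrow>
   Gm f g (\<theta> (Cod B f) (Dom B g) u) = \<theta> (Dom B f) (Cod B g) (Fm f g u)"
  by (simp add: nat_trans_def)

lemma nat_typ: "nat_trans B Fo Fm Go Gm \<theta> \<Longrightarrow> x' \<in> Ob B \<Longrightarrow> x \<in> Ob B \<Longrightarrow> u \<in> Fo x' x \<Longrightarrow> \<theta> x' x u \<in> Go x' x"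
  by (simp add: nat_trans_def)

lemma J_nat: assumes cA: "category A" and cC: "category C" and dG: "difunctor (B1 A C) Go Gm"
    and dG': "difunctor (B1 A C) G'o G'm"
    and dP: "difunctor (B1 A C) Po Pm" and dP': "difunctor (B1 A C) P'o P'm"
    and nt: "nat_trans (B1 A C) G'o G'm Go Gm \<theta>" and np: "nat_trans (B1 A C) Po Pm P'o P'm \<psi>"
    and hd: "h \<in> dinat (B1 A C) Go Gm Po Pm"
  shows "JJ A C G'o G'm P'o P'm (whisker (B1 A C) G'o \<theta> \<psi> h) =
          whisker (B2 A C) (src2o A G'o) (src2nt \<theta>) (tgt2nt \<psi>) (JJ A C Go Gm Po Pm h)"
proof (intro ext)
  fix o1 u
  show "JJ A C G'o G'm P'o P'm (whisker (B1 A C) G'o \<theta> \<psi> h) o1 u =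
          whisker (B2 A C) (src2o A G'o) (src2nt \<theta>) (tgt2nt \<psi>) (JJ A C Go Gm Po Pm h) o1 u"
  proof (cases o1; cases u)
    fix a b x m k assume o1: "o1 = (a, b, x)" and u: "u = (m, k)"
    show ?thesis
    proof (cases "o1 \<in> Ob (B2 A C) \<and> u \<in> src2o A G'o o1 o1")
      case True
      then have a: "a \<in> Ob A" "b \<in> Ob A" "x \<in> Ob C" "m \<in> Ar A" "Dom A m = a" "Cod A m = b"
        "k \<in> G'o (b, x) (a, x)" by (auto simp: o1 u src2o_def)
      define v where "v = G'm (m, Idm C x) (Idm A a, Idm C x) k"
      have v: "v \<in> G'o (a, x) (a, x)" unfolding v_def
        using df_typ[OF dG', of "(m, Idm C x)" "(Idm A a, Idm C x)" k] a cA cC by simp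
      have tk: "\<theta> (b, x) (a, x) k \<in> Go (b, x) (a, x)" using nat_typ[OF nt, of "(b, x)" "(a, x)" k] a by simp
      have n1: "Gm (m, Idm C x) (Idm A a, Idm C x) (\<theta> (b, x) (a, x) k) = \<theta> (a, x) (a, x) v"
        unfolding v_def using nat_eq[OF nt, of "(m, Idm C x)" "(Idm A a, Idm C x)" k] a cA cC by simp
      have tv: "\<theta> (a, x) (a, x) v \<in> Go (a, x) (a, x)" using nat_typ[OF nt, of "(a, x)" "(a, x)" v] a v by simp
      define w where "w = h (a, x) (\<theta> (a, x) (a, x) v)"
      have w: "w \<in> Po (a, x) (a, x)" unfolding w_def using dinat_typ[OF hd] tv a by simp
      have n2: "P'm (Idm A a, Idm C x) (m, Idm C x) (\<psi> (a, x) (a, x) w) = \<psi> (a, x) (b, x) (Pm (Idm A a, Idm C x) (m, Idm C x) w)"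
        using nat_eq[OF np, of "(Idm A a, Idm C x)" "(m, Idm C x)" w] a cA cC w by simp
      show ?thesis using True a v tk n1 n2 cA cC
        by (simp add: o1 u JJ_def NN_def whisker_def src2nt_def tgt2nt_def src2o_def v_def[symmetric] w_def[symmetric])
    next
      case False
      then show ?thesis by (auto simp: o1 u JJ_def whisker_def)
    qed
  qed
qed


theorem mainTheorem2:
  fixes A :: "('a, 'ma) cat" and C :: "('c, 'mc) cat"
  assumes "category A" and "category C"
  shows "\<exists>J :: ('a \<times> 'c \<Rightarrow> 'a \<times> 'c \<Rightarrow> 'v set) \<Rightarrow> ('ma \<times> 'mc \<Rightarrow> 'ma \<times> 'mc \<Rightarrow> 'v \<Rightarrow> 'v)
              \<Rightarrow> ('a \<times> 'c \<Rightarrow> 'a \<times> 'c \<Rightarrow> 'w set) \<Rightarrow> ('ma \<times> 'mc \<Rightarrow> 'ma \<times> 'mc \<Rightarrow> 'w \<Rightarrow> 'w)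
              \<Rightarrow> ('a \<times> 'c \<Rightarrow> 'v \<Rightarrow> 'w) \<Rightarrow> ('a \<times> ('a \<times> 'c) \<Rightarrow> 'ma \<times> 'v \<Rightarrow> 'w).
    (\<forall>Go Gm Po Pm. difunctor (B1 A C) Go Gm \<longrightarrow> difunctor (B1 A C) Po Pm \<longrightarrow>
       bij_betw (J Go Gm Po Pm) (dinat (B1 A C) Go Gm Po Pm)
                (dinat (B2 A C) (src2o A Go) (src2m A Gm) (tgt2o Po) (tgt2m Pm)) \<and>
       (\<forall>h \<in> dinat (B1 A C) Go Gm Po Pm. \<forall>z \<in> Ob A. \<forall>x \<in> Ob C. \<forall>k \<in> Go (z, x) (z, x).
          J Go Gm Po Pm h (z, z, x) (Idm A z, k) = h (z, x) k) \<and>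
       (\<forall>\<alpha> \<in> dinat (B2 A C) (src2o A Go) (src2m A Gm) (tgt2o Po) (tgt2m Pm).
          inv_into (dinat (B1 A C) Go Gm Po Pm) (J Go Gm Po Pm) \<alpha> =
            (\<lambda>(z, x). if (z, x) \<in> Ob (B1 A C)
               then (\<lambda>k. if k \<in> Go (z, x) (z, x) then \<alpha> (z, z, x) (Idm A z, k) else undefined)
               else (\<lambda>_. undefined)))) \<and>
    (\<forall>Go Gm G'o G'm Po Pm P'o P'm \<theta> \<psi>.
       difunctor (B1 A C) Go Gm \<longrightarrow> difunctor (B1 A C) G'o G'm \<longrightarrow>
       difunctor (B1 A C) Po Pm \<longrightarrow> difunctor (B1 A C) P'o P'm \<longrightarrow>
       nat_trans (B1 A C) G'o G'm Go Gm \<theta> \<longrightarrow> nat_trans (B1 A C) Po Pm P'o P'm \<psi> \<longrightarrow>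
       (\<forall>h \<in> dinat (B1 A C) Go Gm Po Pm.
          J G'o G'm P'o P'm (whisker (B1 A C) G'o \<theta> \<psi> h) =
          whisker (B2 A C) (src2o A G'o) (src2nt \<theta>) (tgt2nt \<psi>) (J Go Gm Po Pm h)))"
proof -
  let ?J = "JJ A C"
  have P1: "bij_betw (?J Go Gm Po Pm) (dinat (B1 A C) Go Gm Po Pm)
                (dinat (B2 A C) (src2o A Go) (src2m A Gm) (tgt2o Po) (tgt2m Pm)) \<and>
       (\<forall>h \<in> dinat (B1 A C) Go Gm Po Pm. \<forall>z \<in> Ob A. \<forall>x \<in> Ob C. \<forall>k \<in> Go (z, x) (z, x).
          ?J Go Gm Po Pm h (z, z, x) (Idm A z, k) = h (z, x) k) \<and>
       (\<forall>\<alpha> \<in> dinat (B2 A C) (src2o A Go) (src2m A Gm) (tgt2o Po) (tgt2m Pm).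
          inv_into (dinat (B1 A C) Go Gm Po Pm) (?J Go Gm Po Pm) \<alpha> =
            (\<lambda>(z, x). if (z, x) \<in> Ob (B1 A C)
               then (\<lambda>k. if k \<in> Go (z, x) (z, x) then \<alpha> (z, z, x) (Idm A z, k) else undefined)
               else (\<lambda>_. undefined)))"
    if dG: "difunctor (B1 A C) Go Gm" and dP: "difunctor (B1 A C) Po Pm" for Go Gm Po Pm
  proof -
    have bij: "bij_betw (?J Go Gm Po Pm) (dinat (B1 A C) Go Gm Po Pm)
                (dinat (B2 A C) (src2o A Go) (src2m A Gm) (tgt2o Po) (tgt2m Pm))"
    proof (rule bij_betw_byWitness[where f' = "KK A C Go"])
      show "\<forall>h \<in> dinat (B1 A C) Go Gm Po Pm. KK A C Go (JJ A C Go Gm Po Pm h) = h"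
        using KJ[OF assms dG dP] by (simp add: KK_def)
      show "\<forall>\<alpha> \<in> dinat (B2 A C) (src2o A Go) (src2m A Gm) (tgt2o Po) (tgt2m Pm). JJ A C Go Gm Po Pm (KK A C Go \<alpha>) = \<alpha>"
        using JK[OF assms dG dP] by blast
      show "JJ A C Go Gm Po Pm ` dinat (B1 A C) Go Gm Po Pm \<subseteq> dinat (B2 A C) (src2o A Go) (src2m A Gm) (tgt2o Po) (tgt2m Pm)"
        using J_in[OF assms dG dP] by blast
      show "KK A C Go ` dinat (B2 A C) (src2o A Go) (src2m A Gm) (tgt2o Po) (tgt2m Pm) \<subseteq> dinat (B1 A C) Go Gm Po Pm"
        using K_in[OF assms dG dP] by blast
    qed
    have val: "?J Go Gm Po Pm h (z, z, x) (Idm A z, k) = h (z, x) k"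
      if "h \<in> dinat (B1 A C) Go Gm Po Pm" "z \<in> Ob A" "x \<in> Ob C" "k \<in> Go (z, x) (z, x)" for h z x k
      using fun_cong[OF fun_cong[OF KJ[OF assms dG dP that(1)], of "(z, x)"], of k] that by simp
    have inv: "inv_into (dinat (B1 A C) Go Gm Po Pm) (?J Go Gm Po Pm) \<alpha> = KK A C Go \<alpha>"
      if "\<alpha> \<in> dinat (B2 A C) (src2o A Go) (src2m A Gm) (tgt2o Po) (tgt2m Pm)" for \<alpha>
      apply (rule inv_into_f_eq)
      apply (rule bij_betw_imp_inj_on[OF bij])
      apply (rule K_in[OF assms dG dP that])
      apply (rule JK[OF assms dG dP that])
      done
    show ?thesis using bij val inv by (simp add: KK_def)
  qed
  show ?thesis
    apply (rule exI[of _ ?J])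
    apply (rule conjI)
     apply (intro allI impI)
     apply (rule P1; assumption)
    apply (intro allI impI ballI)
    apply (rule J_nat[OF assms]; assumption)
    done
qed

end
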